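(* Every partition tautology is a subset tautology. Moreover the inclusion is strict: for any set $U$ and any partition $\sigma$ on $U$ with $\sigma\neq\mathbf{0}$ and $\sigma\neq\mathbf{1}$ (such $\sigma$ exist when $|U|\ge 3$), one has $\sigma\vee(\sigma\Rightarrow\mathbf{0})=\sigma\neq\mathbf{1}$; hence the formula $x\vee(x\Rightarrow\mathbf{0})$ is a subset tautology but not a partition tautology.
   Context: Formulas are built from variables and the constants $\mathbf{0},\mathbf{1}$ using the binary connectives $\vee,\wedge,\Rightarrow$. A formula is a subset tautology if, for every nonempty set $U$ and every assignment of subsets of $U$ to the variables, it evaluates to $U$ when $\vee,\wedge$ are interpreted as $\cup,\cap$, $S\Rightarrow T$ as $(U\setminus S)\cup T$, $\mathbf{0}$ as $\emptyset$ and $\mathbf{1}$ as $U$. A partition on a set $U$ is a set of non-empty, pairwise disjoint subsets of $U$ (called blocks) whose union is $U$. The discrete partition is $\mathbf{1}=\{\{u\}:u\in U\}$ and the indiscrete partition is $\mathbf{0}=\{U\}$. The join $\pi\vee\sigma$ is the partition whose blocks are the non-empty intersections $B\cap C$, $B\in\pi$, $C\in\sigma$. The meet $\pi\wedge\sigma$ is the partition whose blocks are the equivalence classes of the equivalence relation on $U$ generated by: $u\sim u'$ if $u,u'$ lie in a common block of $\pi$ or in a common block of $\sigma$. The partition implication $\sigma\Rightarrow\pi$ is the partition obtained from $\pi$ by replacing every block $B\in\pi$ that is contained in some block of $\sigma$ by the singletons $\{u\}$, $u\in B$, and leaving every block of $\pi$ not contained in any block of $\sigma$ unchanged. A formula is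 a partition tautology if, for every set $U$ with $|U|\ge 2$ and every assignment of partitions on $U$ to the variables, it evaluates to $\mathbf{1}$ when $\vee,\wedge,\Rightarrow,\mathbf{0},\mathbf{1}$ are interpreted as the partition join, meet, implication, indiscrete and discrete partitions. *)

theory Defs
  imports Main "HOL-Library.Infinite_Typeclass"
begin

datatype form = Var nat | FZero | FOne | FJoin form form | FMeet form form | FImp form form

fun seval :: "'a set \<Rightarrow> (nat \<Rightarrow> 'a set) \<Rightarrow> form \<Rightarrow> 'a set" where
  "seval U \<rho> (Var v) = \<rho> v"
| "seval U \<rho> FZero = {}"
| "seval U \<rho> FOne = U"
| "seval U \<rho> (FJoin p q) = seval U \<rho> p \<union> seval U \<rho> q"
| "seval U \<rho> (FMeet p q) = seval U \<rho> p \<inter> seval U \<rho> q"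
| "seval U \<rho> (FImp p q) = (U - seval U \<rho> p) \<union> seval U \<rho> q"

definition subset_taut :: "'a itself \<Rightarrow> form \<Rightarrow> bool" where
  "subset_taut (_::'a itself) \<phi> \<longleftrightarrow>
     (\<forall>(U::'a set) \<rho>. U \<noteq> {} \<longrightarrow> (\<forall>v. \<rho> v \<subseteq> U) \<longrightarrow> seval U \<rho> \<phi> = U)"

definition is_partition :: "'a set \<Rightarrow> 'a set set \<Rightarrow> bool" where
  "is_partition U P \<longleftrightarrow> (\<forall>B\<in>P. B \<noteq> {}) \<and> (\<forall>B\<in>P. \<forall>C\<in>P. B \<noteq> C \<longrightarrow> B \<inter> C = {}) \<and> \<Union>P = U"

definition pdiscrete :: "'a set \<Rightarrow> 'a set set" where
  "pdiscrete U = {{u} | u. u \<in> U}"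

definition pindiscrete :: "'a set \<Rightarrow> 'a set set" where
  "pindiscrete U = {U}"

definition pjoin :: "'a set set \<Rightarrow> 'a set set \<Rightarrow> 'a set set" where
  "pjoin \<pi> \<sigma> = {B \<inter> C | B C. B \<in> \<pi> \<and> C \<in> \<sigma> \<and> B \<inter> C \<noteq> {}}"

definition pmeet :: "'a set \<Rightarrow> 'a set set \<Rightarrow> 'a set set \<Rightarrow> 'a set set" where
  "pmeet U \<pi> \<sigma> = U // ({(u, u'). \<exists>B \<in> \<pi> \<union> \<sigma>. u \<in> B \<and> u' \<in> B}\<^sup>*)"

definition pimp :: "'a set set \<Rightarrow> 'a set set \<Rightarrow> 'a set set" where
  "pimp \<sigma> \<pi> = {B \<in> \<pi>. \<not> (\<exists>C\<in>\<sigma>. B \<subseteq> C)}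
              \<union> {{u} | u B. B \<in> \<pi> \<and> (\<exists>C\<in>\<sigma>. B \<subseteq> C) \<and> u \<in> B}"

fun peval :: "'a set \<Rightarrow> (nat \<Rightarrow> 'a set set) \<Rightarrow> form \<Rightarrow> 'a set set" where
  "peval U \<rho> (Var v) = \<rho> v"
| "peval U \<rho> FZero = pindiscrete U"
| "peval U \<rho> FOne = pdiscrete U"
| "peval U \<rho> (FJoin p q) = pjoin (peval U \<rho> p) (peval U \<rho> q)"
| "peval U \<rho> (FMeet p q) = pmeet U (peval U \<rho> p) (peval U \<rho> q)"
| "peval U \<rho> (FImp p q) = pimp (peval U \<rho> p) (peval U \<rho> q)"

definition partition_taut :: "'a itself \<Rightarrow> form \<Rightarrow> bool" where
  "partition_taut (_::'a itself) \<phi> \<longleftrightarrow>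
     (\<forall>(U::'a set) \<rho>. (\<exists>a b. a \<in> U \<and> b \<in> U \<and> a \<noteq> b) \<longrightarrow>
        (\<forall>v. is_partition U (\<rho> v)) \<longrightarrow> peval U \<rho> \<phi> = pdiscrete U)"

end

theory Submission
  imports Defs
begin

lemma pjoin_DD: "pjoin (pdiscrete U) (pdiscrete U) = pdiscrete U"
  unfolding pjoin_def pdiscrete_def by auto
lemma pjoin_DI: "pjoin (pdiscrete U) (pindiscrete U) = pdiscrete U"
  unfolding pjoin_def pdiscrete_def pindiscrete_def by auto
lemma pjoin_ID: "pjoin (pindiscrete U) (pdiscrete U) = pdiscrete U"
  unfolding pjoin_def pdiscrete_def pindiscrete_def by auto
lemma pjoin_II: "U \<noteq> {} \<Longrightarrow> pjoin (pindiscrete U) (pindiscrete U) = pindiscrete U"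
  unfolding pjoin_def pindiscrete_def by auto

lemma pmeet_DD: "pmeet U (pdiscrete U) (pdiscrete U) = pdiscrete U"
proof -
  have "{(u, u'). \<exists>B \<in> pdiscrete U \<union> pdiscrete U. u \<in> B \<and> u' \<in> B} = Id_on U"
    unfolding pdiscrete_def by (auto simp: Id_on_def)
  moreover have "(Id_on U)\<^sup>* = Id"
  proof (rule equalityI)
    show "(Id_on U)\<^sup>* \<subseteq> Id" using rtrancl_mono[of "Id_on U" Id] by (auto simp: Id_on_def)
  qed auto
  ultimately show ?thesis unfolding pmeet_def pdiscrete_def quotient_def by auto
qed

lemma pmeet_I:
  assumes "U \<noteq> {}" and "pindiscrete U \<in> {\<pi>, \<sigma>}" and "\<forall>B\<in>\<pi> \<union> \<sigma>. B \<subseteq> U"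
  shows "pmeet U \<pi> \<sigma> = pindiscrete U"
proof -
  let ?R = "{(u, u'). \<exists>B \<in> \<pi> \<union> \<sigma>. u \<in> B \<and> u' \<in> B}"
  have "?R = U \<times> U" using assms(2,3) unfolding pindiscrete_def by blast
  hence "?R\<^sup>* = U \<times> U \<union> Id"
  proof -
    have "trans (U \<times> U)" by (auto simp: trans_def)
    thus ?thesis using \<open>?R = U \<times> U\<close> by (simp add: rtrancl_trancl_reflcl trancl_id)
  qed
  thus ?thesis using assms(1) unfolding pmeet_def pindiscrete_def quotient_def by auto
qed

lemma sub_DI: "\<forall>B\<in>pdiscrete U \<union> pindiscrete U. B \<subseteq> U"
  unfolding pdiscrete_def pindiscrete_def by auto
lemma pmeet_DI: "U \<noteq> {} \<Longrightarrow> pmeet U (pdiscrete U) (pindiscrete U) = pindiscrete U"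
  by (rule pmeet_I) (auto simp: pdiscrete_def pindiscrete_def)
lemma pmeet_ID: "U \<noteq> {} \<Longrightarrow> pmeet U (pindiscrete U) (pdiscrete U) = pindiscrete U"
  by (rule pmeet_I) (auto simp: pdiscrete_def pindiscrete_def)
lemma pmeet_II: "U \<noteq> {} \<Longrightarrow> pmeet U (pindiscrete U) (pindiscrete U) = pindiscrete U"
  by (rule pmeet_I) (auto simp: pdiscrete_def pindiscrete_def)

lemma pimp_xD: "pimp \<sigma> (pdiscrete U) = pdiscrete U" if "\<Union>\<sigma> = U"
  using that unfolding pimp_def pdiscrete_def by auto

lemma pimp_II: "U \<noteq> {} \<Longrightarrow> pimp (pindiscrete U) (pindiscrete U) = pdiscrete U"
  unfolding pimp_def pdiscrete_def pindiscrete_def by auto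

lemma pimp_DI: "a \<in> U \<Longrightarrow> b \<in> U \<Longrightarrow> a \<noteq> b \<Longrightarrow> pimp (pdiscrete U) (pindiscrete U) = pindiscrete U"
  unfolding pimp_def pdiscrete_def pindiscrete_def by auto

lemma DI_ne: "a \<in> U \<Longrightarrow> b \<in> U \<Longrightarrow> a \<noteq> b \<Longrightarrow> pdiscrete U \<noteq> pindiscrete U"
  unfolding pdiscrete_def pindiscrete_def by (auto simp: set_eq_iff) (metis singletonD)

lemma Union_D: "\<Union>(pdiscrete U) = U" unfolding pdiscrete_def by auto
lemma Union_I: "\<Union>(pindiscrete U) = U" unfolding pindiscrete_def by auto

lemma key:
  fixes \<rho> :: "nat \<Rightarrow> 'b set"
  assumes a: "a \<in> U'" "b \<in> U'" "a \<noteq> b" and uU: "u \<in> U"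
  shows "peval U' (\<lambda>v. if u \<in> \<rho> v then pdiscrete U' else pindiscrete U') \<phi>
       = (if u \<in> seval U \<rho> \<phi> then pdiscrete U' else pindiscrete U')"
  using assms
proof (induction \<phi>)
  case (FMeet p q)
  have ne: "U' \<noteq> {}" using a by auto
  show ?case using FMeet
    by (simp add: pmeet_DD pmeet_DI[OF ne] pmeet_ID[OF ne] pmeet_II[OF ne])
next
  case (FJoin p q)
  have ne: "U' \<noteq> {}" using a by auto
  show ?case using FJoin by (simp add: pjoin_DD pjoin_DI pjoin_ID pjoin_II[OF ne])
next
  case (FImp p q)
  have ne: "U' \<noteq> {}" using a by auto
  show ?case using FImp uU
    by (simp add: pimp_xD Union_D Union_I pimp_II[OF ne] pimp_DI[OF a])
qed (use a in auto)

lemma seval_sub: fixes \<rho> :: "nat \<Rightarrow> 'b set" shows "(\<forall>v. \<rho> v \<subseteq> U) \<Longrightarrow> seval U \<rho> \<phi> \<subseteq> U"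
  by (induction \<phi>) auto

lemma part1:
  assumes "partition_taut TYPE('a::infinite) \<phi>"
  shows "subset_taut TYPE('b) \<phi>"
  unfolding subset_taut_def
proof (intro allI impI)
  fix U :: "'b set" and \<rho> :: "nat \<Rightarrow> 'b set"
  assume "U \<noteq> {}" and r: "\<forall>v. \<rho> v \<subseteq> U"
  obtain a :: 'a where True by auto
  obtain b :: 'a where "b \<noteq> a"
    using ex_new_if_finite[OF infinite_UNIV, of "{a}"] by auto
  show "seval U \<rho> \<phi> = U"
  proof
    show "seval U \<rho> \<phi> \<subseteq> U" using seval_sub r by blast
    show "U \<subseteq> seval U \<rho> \<phi>"
    proof
      fix u assume "u \<in> U"
      let ?r = "\<lambda>v. if u \<in> \<rho> v then pdiscrete (UNIV::'a set) else pindiscrete UNIV"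
      have "\<forall>v. is_partition UNIV (?r v)"
        unfolding is_partition_def pdiscrete_def pindiscrete_def by auto
      moreover have "\<exists>x y. x \<in> (UNIV::'a set) \<and> y \<in> UNIV \<and> x \<noteq> y"
        using \<open>b \<noteq> a\<close> by blast
      ultimately have "peval UNIV ?r \<phi> = pdiscrete UNIV"
        using assms[unfolded partition_taut_def, rule_format, of UNIV ?r] by blast
      moreover have "peval UNIV ?r \<phi> = (if u \<in> seval U \<rho> \<phi> then pdiscrete UNIV else pindiscrete UNIV)"
        by (rule key[of a UNIV b]) (use \<open>b \<noteq> a\<close> \<open>u \<in> U\<close> in auto)
      moreover have "pdiscrete (UNIV::'a set) \<noteq> pindiscrete UNIV"
        using DI_ne[of a UNIV b] \<open>b \<noteq> a\<close> by blast
      ultimately show "u \<in> seval U \<rho> \<phi>"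
        by (cases "u \<in> seval U \<rho> \<phi>") simp_all
    qed
  qed
qed

lemma part2:
  assumes "is_partition U \<sigma>" "\<sigma> \<noteq> pindiscrete U" "\<sigma> \<noteq> pdiscrete U"
  shows "pjoin \<sigma> (pimp \<sigma> (pindiscrete U)) = \<sigma>"
proof -
  have P1: "\<And>B. B \<in> \<sigma> \<Longrightarrow> B \<noteq> {}" and
       P2: "\<And>B C. B \<in> \<sigma> \<Longrightarrow> C \<in> \<sigma> \<Longrightarrow> B \<noteq> C \<Longrightarrow> B \<inter> C = {}" and
       P3: "\<Union>\<sigma> = U" using assms(1) unfolding is_partition_def by auto
  have sub: "\<And>B. B \<in> \<sigma> \<Longrightarrow> B \<subseteq> U" using P3 by blast
  have nU: "\<not> (\<exists>C\<in>\<sigma>. U \<subseteq> C)"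
  proof
    assume "\<exists>C\<in>\<sigma>. U \<subseteq> C"
    then obtain C where C: "C \<in> \<sigma>" "U \<subseteq> C" by blast
    hence CU: "C = U" using sub by blast
    have "\<sigma> = {U}"
    proof (rule set_eqI, rule iffI)
      fix x assume x: "x \<in> \<sigma>"
      show "x \<in> {U}"
      proof (rule ccontr)
        assume "x \<notin> {U}"
        hence "x \<inter> C = {}" using P2[OF x C(1)] CU by auto
        thus False using sub[OF x] P1[OF x] CU by blast
      qed
    qed (use C CU in auto)
    thus False using assms(2) unfolding pindiscrete_def by simp
  qed
  hence "pimp \<sigma> (pindiscrete U) = {U}" unfolding pimp_def pindiscrete_def by auto
  moreover have "pjoin \<sigma> {U} = \<sigma>"
  proof (rule set_eqI, rule iffI)
    fix x assume "x \<in> pjoin \<sigma> {U}"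
    then obtain B where B: "B \<in> \<sigma>" "x = B \<inter> U" unfolding pjoin_def by blast
    have "B \<subseteq> U" using sub B(1) by blast
    thus "x \<in> \<sigma>" using B by (simp add: Int_absorb2)
  next
    fix x assume x: "x \<in> \<sigma>"
    have "x \<subseteq> U" "x \<noteq> {}" using sub[OF x] P1[OF x] by blast+
    hence "x = x \<inter> U \<and> x \<in> \<sigma> \<and> U \<in> {U} \<and> x \<inter> U \<noteq> {}" using x by blast
    thus "x \<in> pjoin \<sigma> {U}" unfolding pjoin_def by blast
  qed
  ultimately show ?thesis by simp
qed

lemma part3:
  assumes "a \<in> U" "b \<in> U" "c \<in> U" "a \<noteq> b" "a \<noteq> c" "b \<noteq> c"
  shows "is_partition U {{a}, U - {a}} \<and> {{a}, U - {a}} \<noteq> pindiscrete U \<and> {{a}, U - {a}} \<noteq> pdiscrete U"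
proof (intro conjI)
  have d: "{a} \<inter> (U - {a}) = {}" "(U - {a}) \<inter> {a} = {}" by blast+
  have n: "{a} \<noteq> {}" "U - {a} \<noteq> {}" using assms by blast+
  have un: "\<Union>{{a}, U - {a}} = U" using assms by blast
  show "is_partition U {{a}, U - {a}}" unfolding is_partition_def
  proof (intro conjI ballI impI)
    fix B C assume "B \<in> {{a}, U - {a}}" "C \<in> {{a}, U - {a}}" "B \<noteq> C"
    thus "B \<inter> C = {}" using d by (elim insertE emptyE) simp_all
  qed (use n un in auto)
  show "{{a}, U - {a}} \<noteq> pindiscrete U"
  proof
    assume "{{a}, U - {a}} = pindiscrete U"
    hence "{a} \<in> {U}" unfolding pindiscrete_def by (metis insertI1)
    hence "{a} = U" by simp
    hence "b = a" using assms(2) by blast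
    thus False using assms(4) by simp
  qed
  show "{{a}, U - {a}} \<noteq> pdiscrete U"
  proof
    assume "{{a}, U - {a}} = pdiscrete U"
    hence "U - {a} \<in> pdiscrete U" by auto
    then obtain u where "U - {a} = {u}" unfolding pdiscrete_def by auto
    moreover have "b \<in> U - {a}" "c \<in> U - {a}" using assms by simp_all
    ultimately show False using assms by simp
  qed
qed

theorem mainTheorem8:
  shows "(\<forall>\<phi>. partition_taut TYPE('a::infinite) \<phi> \<longrightarrow> subset_taut TYPE('b) \<phi>)
    \<and> (\<forall>(U::'c set) \<sigma>. is_partition U \<sigma> \<and> \<sigma> \<noteq> pindiscrete U \<and> \<sigma> \<noteq> pdiscrete U \<longrightarrow>
          pjoin \<sigma> (pimp \<sigma> (pindiscrete U)) = \<sigma> \<and> \<sigma> \<noteq> pdiscrete U)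
    \<and> (\<forall>(U::'c set). (\<exists>a b c. a \<in> U \<and> b \<in> U \<and> c \<in> U \<and> a \<noteq> b \<and> a \<noteq> c \<and> b \<noteq> c) \<longrightarrow>
          (\<exists>\<sigma>. is_partition U \<sigma> \<and> \<sigma> \<noteq> pindiscrete U \<and> \<sigma> \<noteq> pdiscrete U))
    \<and> subset_taut TYPE('b) (FJoin (Var 0) (FImp (Var 0) FZero))
    \<and> \<not> partition_taut TYPE('a) (FJoin (Var 0) (FImp (Var 0) FZero))"
proof (intro conjI allI impI)
  fix \<phi> assume "partition_taut TYPE('a) \<phi>"
  thus "subset_taut TYPE('b) \<phi>" by (rule part1)
next
  fix U :: "'c set" and \<sigma>
  assume h: "is_partition U \<sigma> \<and> \<sigma> \<noteq> pindiscrete U \<and> \<sigma> \<noteq> pdiscrete U"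
  show "pjoin \<sigma> (pimp \<sigma> (pindiscrete U)) = \<sigma>"
    using part2[of U \<sigma>] h by simp
  show "\<sigma> \<noteq> pdiscrete U" using h by simp
next
  fix U :: "'c set"
  assume "\<exists>a b c. a \<in> U \<and> b \<in> U \<and> c \<in> U \<and> a \<noteq> b \<and> a \<noteq> c \<and> b \<noteq> c"
  then obtain a b c where "a \<in> U" "b \<in> U" "c \<in> U" "a \<noteq> b" "a \<noteq> c" "b \<noteq> c" by auto
  from part3[OF this] show "\<exists>\<sigma>. is_partition U \<sigma> \<and> \<sigma> \<noteq> pindiscrete U \<and> \<sigma> \<noteq> pdiscrete U"
    by (intro exI)
next
  show "subset_taut TYPE('b) (FJoin (Var 0) (FImp (Var 0) FZero))"
    unfolding subset_taut_def by auto
next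
  show "\<not> partition_taut TYPE('a) (FJoin (Var 0) (FImp (Var 0) FZero))"
  proof
    assume T: "partition_taut TYPE('a) (FJoin (Var 0) (FImp (Var 0) FZero))"
    obtain a :: 'a where True by auto
    obtain b :: 'a where "b \<notin> {a}"
      using ex_new_if_finite[OF infinite_UNIV, of "{a}"] by auto
    obtain c :: 'a where "c \<notin> {a, b}"
      using ex_new_if_finite[OF infinite_UNIV, of "{a, b}"] by auto
    define U where "U = {a, b, c}"
    define s where "s = {{a}, U - {a}}"
    have P: "is_partition U s \<and> s \<noteq> pindiscrete U \<and> s \<noteq> pdiscrete U"
      unfolding s_def by (rule part3[of a U b c]) (use \<open>b \<notin> {a}\<close> \<open>c \<notin> {a, b}\<close> in \<open>auto simp: U_def\<close>)
    have ex: "\<exists>x y. x \<in> U \<and> y \<in> U \<and> x \<noteq> y"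
      using \<open>b \<notin> {a}\<close> unfolding U_def by blast
    have all: "\<forall>v. is_partition U ((\<lambda>v. s) v)" using P by simp
    have "peval U (\<lambda>v. s) (FJoin (Var 0) (FImp (Var 0) FZero)) = pdiscrete U"
      using T[unfolded partition_taut_def, rule_format, of U "\<lambda>v. s"] ex all by simp
    moreover have "peval U (\<lambda>v. s) (FJoin (Var 0) (FImp (Var 0) FZero)) = s"
      using part2[of U s] P by simp
    ultimately have "s = pdiscrete U" by (metis (no_types))
    with P show False by blast
  qed
qed

end
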